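(* Let $\lambda,\xi\in\mathbb{C}$ with $\operatorname{Re}\lambda<0$ and $\operatorname{Re}\xi\ge1$, and let $f(z)=e^{-z+\lambda}+\xi$. Then the imaginary axis $\{z:\operatorname{Re}z=0\}$ does not intersect $I(f)$.
   Context: For an entire function $f$, $f^n$ denotes the $n$-th iterate and $I(f)=\{z\in\mathbb{C}: f^n(z)\to\infty\}$ is its escaping set. *)

theory Defs
  imports "HOL-Analysis.Analysis"
begin

definition escaping_set :: "(complex \<Rightarrow> complex) \<Rightarrow> complex set" where
  "escaping_set f = {z. filterlim (\<lambda>n. (f ^^ n) z) at_infinity sequentially}"

end

theory Submission
  imports Defs
begin

theorem lemma2:
  fixes lam xi :: complex
  assumes "Re lam < 0" and "Re xi \<ge> 1"
  shows "{z. Re z = 0} \<inter> escaping_set (\<lambda>z. exp (- z + lam) + xi) = {}"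
proof (rule ccontr)
  let ?f = "\<lambda>z. exp (- z + lam) + xi"
  assume "{z. Re z = 0} \<inter> escaping_set ?f \<noteq> {}"
  then obtain z where z0: "Re z = 0" and esc: "filterlim (\<lambda>n. (?f ^^ n) z) at_infinity sequentially"
    by (auto simp: escaping_set_def)
  define B where "B = max (norm z) (1 + norm xi)"
  have step: "Re (?f w) \<ge> 0 \<and> norm (?f w) \<le> 1 + norm xi" if "Re w \<ge> 0" for w
  proof -
    have n: "norm (exp (- w + lam)) = exp (Re (- w + lam))" by (rule norm_exp_eq_Re)
    have "Re (- w + lam) < 0" using that assms(1) by simp
    hence lt: "norm (exp (- w + lam)) < 1" using n by simp
    have "Re (exp (- w + lam)) \<ge> - norm (exp (- w + lam))"
      using abs_Re_le_cmod[of "exp (- w + lam)"] by linarith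
    moreover have "Re (?f w) = Re (exp (- w + lam)) + Re xi" by simp
    ultimately have "Re (?f w) \<ge> 0" using lt assms(2) by linarith
    moreover have "norm (?f w) \<le> 1 + norm xi"
      using norm_triangle_ineq[of "exp (- w + lam)" xi] lt by linarith
    ultimately show ?thesis by blast
  qed
  have all: "Re ((?f ^^ n) z) \<ge> 0 \<and> norm ((?f ^^ n) z) \<le> B" for n
  proof (induction n)
    case 0 then show ?case using z0 by (simp add: B_def)
  next
    case (Suc n)
    then have "Re (?f ((?f ^^ n) z)) \<ge> 0 \<and> norm (?f ((?f ^^ n) z)) \<le> 1 + norm xi"
      using step by blast
    then show ?case by (auto simp: B_def)
  qed
  have "\<forall>r>0. eventually (\<lambda>n. r \<le> norm ((?f ^^ n) z)) sequentially"
    using esc by (simp only: filterlim_at_infinity[OF order_refl])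
  hence "eventually (\<lambda>n. B + 1 \<le> norm ((?f ^^ n) z)) sequentially"
  proof -
    have "B + 1 > 0" unfolding B_def by (smt (verit) norm_ge_zero)
    then show ?thesis using \<open>\<forall>r>0. _\<close> by blast
  qed
  then obtain N where "\<And>n. n \<ge> N \<Longrightarrow> B + 1 \<le> norm ((?f ^^ n) z)"
    by (auto simp: eventually_sequentially)
  with all[of N] show False by force
qed

end
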